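(* Let $a_1<\dots<a_n$ and $d_1,\dots,d_n$ be real numbers forming a symmetric unit with $a_n=-a_1$, i.e. $a_{n+1-i}=-a_i$ and $d_{n+1-i}=d_i$ for all $i\in\{1,\dots,n\}$. Then for every $H\in\mathbb{R}$, the maximum over $c\in\mathbb{R}$ of $\big|\sum_{i=1}^n d_i\sin(Ha_i+c)\big|$ is attained at $c=\pi/2$ (equivalently at $c=-\pi/2$); that is, one may take $c_{max}(H)=\pm\pi/2$.
   Context: For an array of Josephson junctions with real positions $a_1<\dots<a_n$ and real strengths $d_1,\dots,d_n$, and an applied magnetic field $H\in\mathbb{R}$, the maximal current in the magnetic approximation is $\gamma_{max}(H)=\max_{c\in\mathbb{R}}\big|\sum_{i=1}^n d_i\sin(Ha_i+c)\big|$, and $c_{max}(H)$ denotes a value of $c$ at which this maximum is attained. *)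

theory Defs
  imports "HOL-Analysis.Analysis"
begin

definition junction_current :: "nat \<Rightarrow> (nat \<Rightarrow> real) \<Rightarrow> (nat \<Rightarrow> real) \<Rightarrow> real \<Rightarrow> real \<Rightarrow> real" where
  "junction_current n a d H c = (\<Sum>i=1..n. d i * sin (H * a i + c))"

definition gamma_max :: "nat \<Rightarrow> (nat \<Rightarrow> real) \<Rightarrow> (nat \<Rightarrow> real) \<Rightarrow> real \<Rightarrow> real" where
  "gamma_max n a d H = (SUP c. \<bar>junction_current n a d H c\<bar>)"

end

theory Submission
  imports Defs
begin

theorem mainTheorem4:
  fixes n :: nat and a d :: "nat \<Rightarrow> real" and H :: real
  assumes incr: "\<And>i j. 1 \<le> i \<Longrightarrow> i < j \<Longrightarrow> j \<le> n \<Longrightarrow> a i < a j"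
    and sym_a: "\<And>i. 1 \<le> i \<Longrightarrow> i \<le> n \<Longrightarrow> a (n + 1 - i) = - a i"
    and sym_d: "\<And>i. 1 \<le> i \<Longrightarrow> i \<le> n \<Longrightarrow> d (n + 1 - i) = d i"
  shows "(\<forall>c. \<bar>junction_current n a d H c\<bar> \<le> \<bar>junction_current n a d H (pi/2)\<bar>)
       \<and> (\<forall>c. \<bar>junction_current n a d H c\<bar> \<le> \<bar>junction_current n a d H (-pi/2)\<bar>)
       \<and> gamma_max n a d H = \<bar>junction_current n a d H (pi/2)\<bar>
       \<and> gamma_max n a d H = \<bar>junction_current n a d H (-pi/2)\<bar>"
proof -
  define S where "S = (\<Sum>i=1..n. d i * sin (H * a i))"
  define A where "A = (\<Sum>i=1..n. d i * cos (H * a i))"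
  have "S = (\<Sum>i=1..n. d (n + 1 - i) * sin (H * a (n + 1 - i)))"
    unfolding S_def by (rule sum.atLeastAtMost_rev)
  also have "\<dots> = (\<Sum>i=1..n. - (d i * sin (H * a i)))"
    proof (rule sum.cong)
    fix i assume "i \<in> {1..n}"
    then have "1 \<le> i" "i \<le> n" by auto
    then show "d (n + 1 - i) * sin (H * a (n + 1 - i)) = - (d i * sin (H * a i))"
      using sym_a[of i] sym_d[of i] by simp
  qed simp
  also have "\<dots> = - S" unfolding S_def by (simp add: sum_negf)
  finally have S0: "S = 0" by simp
  have J: "junction_current n a d H c = sin c * A" for c
  proof -
    have "junction_current n a d H c = sin c * A + cos c * S"
      unfolding junction_current_def A_def S_def
      by (simp add: sin_add sum_distrib_left sum.distrib algebra_simps)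
    thus ?thesis using S0 by simp
  qed
  have b: "\<bar>junction_current n a d H c\<bar> \<le> \<bar>A\<bar>" for c
    unfolding J abs_mult using abs_sin_le_one[of c]
    by (simp add: mult_left_le_one_le)
  have p: "\<bar>junction_current n a d H (pi/2)\<bar> = \<bar>A\<bar>" by (simp add: J)
  have m: "\<bar>junction_current n a d H (-pi/2)\<bar> = \<bar>A\<bar>" by (simp add: J)
  have g: "gamma_max n a d H = \<bar>A\<bar>"
    unfolding gamma_max_def
  proof (rule antisym)
    show "(SUP c. \<bar>junction_current n a d H c\<bar>) \<le> \<bar>A\<bar>"
      by (rule cSUP_least) (auto simp: b)
    show "\<bar>A\<bar> \<le> (SUP c. \<bar>junction_current n a d H c\<bar>)"
      unfolding p[symmetric]
      by (rule cSUP_upper) (auto intro!: bdd_aboveI2 b)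
  qed
  show ?thesis using b p m g by simp
qed

end
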